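(* For every real $s$, the measures $\Phi_s(P\|Q)$, $\Omega_s(P\|Q)$ and $\Omega_s(Q\|P)$ are nonnegative and jointly convex in the pair $(P,Q)\in\Gamma_n\times\Gamma_n$; and for every $s\in[0,4]$, the measures $\zeta_s(P\|Q)$ and $\zeta_s(Q\|P)$ are nonnegative and jointly convex in $(P,Q)\in\Gamma_n\times\Gamma_n$.
   Context: $\Gamma_n=\{P=(p_1,\dots,p_n): p_i>0,\ \sum_i p_i=1\}$, $n\ge2$. For $P,Q\in\Gamma_n$ and $s\in\mathbb{R}$: $\Phi_s(P\|Q)=[s(s-1)]^{-1}\big[\sum_i p_i^s q_i^{1-s}-1\big]$ for $s\ne0,1$; $\Phi_0(P\|Q)=\sum_i q_i\ln(q_i/p_i)$; $\Phi_1(P\|Q)=\sum_i p_i\ln(p_i/q_i)$. $\Omega_s(P\|Q)=[s(s-1)]^{-1}\big[\sum_i p_i\big(\frac{p_i+q_i}{2p_i}\big)^s-1\big]$ for $s\ne0,1$; $\Omega_0(P\|Q)=\sum_i p_i\ln\frac{2p_i}{p_i+q_i}$; $\Omega_1(P\|Q)=\sum_i\frac{p_i+q_i}{2}\ln\frac{p_i+q_i}{2p_i}$. $\zeta_s(P\|Q)=(s-1)^{-1}\sum_i(p_i-q_i)\big(\frac{p_i+q_i}{2q_i}\big)^{s-1}$ for $s\ne1$; $\zeta_1(P\|Q)=\sum_i(p_i-q_i)\ln\frac{p_i+q_i}{2q_i}$. $\Omega_s(Q\|P)$ and $\zeta_s(Q\|P)$ are obtained by interchanging the roles of $p_i$ and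 $q_i$. *)

theory Defs
  imports "HOL-Analysis.Analysis"
begin

text \<open>Probability distributions on n points, represented as functions nat => real,
  only the values at indices 0..n-1 are relevant.\<close>

definition Gamma :: "nat \<Rightarrow> (nat \<Rightarrow> real) set" where
  "Gamma n = {p. (\<forall>i<n. 0 < p i) \<and> (\<Sum>i<n. p i) = 1}"

definition Phi :: "real \<Rightarrow> nat \<Rightarrow> (nat \<Rightarrow> real) \<Rightarrow> (nat \<Rightarrow> real) \<Rightarrow> real" where
  "Phi s n p q =
    (if s = 0 then (\<Sum>i<n. q i * ln (q i / p i))
     else if s = 1 then (\<Sum>i<n. p i * ln (p i / q i))
     else ((\<Sum>i<n. p i powr s * q i powr (1 - s)) - 1) / (s * (s - 1)))"

definition Omega :: "real \<Rightarrow> nat \<Rightarrow> (nat \<Rightarrow> real) \<Rightarrow> (nat \<Rightarrow> real) \<Rightarrow> real" where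
  "Omega s n p q =
    (if s = 0 then (\<Sum>i<n. p i * ln (2 * p i / (p i + q i)))
     else if s = 1 then (\<Sum>i<n. (p i + q i) / 2 * ln ((p i + q i) / (2 * p i)))
     else ((\<Sum>i<n. p i * ((p i + q i) / (2 * p i)) powr s) - 1) / (s * (s - 1)))"

definition Zeta :: "real \<Rightarrow> nat \<Rightarrow> (nat \<Rightarrow> real) \<Rightarrow> (nat \<Rightarrow> real) \<Rightarrow> real" where
  "Zeta s n p q =
    (if s = 1 then (\<Sum>i<n. (p i - q i) * ln ((p i + q i) / (2 * q i)))
     else (\<Sum>i<n. (p i - q i) * ((p i + q i) / (2 * q i)) powr (s - 1)) / (s - 1))"

definition nonneg_on_Gamma :: "nat \<Rightarrow> ((nat \<Rightarrow> real) \<Rightarrow> (nat \<Rightarrow> real) \<Rightarrow> real) \<Rightarrow> bool" where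
  "nonneg_on_Gamma n D = (\<forall>p\<in>Gamma n. \<forall>q\<in>Gamma n. 0 \<le> D p q)"

definition jointly_convex_on_Gamma :: "nat \<Rightarrow> ((nat \<Rightarrow> real) \<Rightarrow> (nat \<Rightarrow> real) \<Rightarrow> real) \<Rightarrow> bool" where
  "jointly_convex_on_Gamma n D =
    (\<forall>p1\<in>Gamma n. \<forall>q1\<in>Gamma n. \<forall>p2\<in>Gamma n. \<forall>q2\<in>Gamma n. \<forall>t::real. 0 \<le> t \<and> t \<le> 1 \<longrightarrow>
       D (\<lambda>i. t * p1 i + (1 - t) * p2 i) (\<lambda>i. t * q1 i + (1 - t) * q2 i)
         \<le> t * D p1 q1 + (1 - t) * D p2 q2)"

end

theory Submission
  imports Defs
begin

definition PS :: "(real \<Rightarrow> real) \<Rightarrow> real \<Rightarrow> real \<Rightarrow> real \<Rightarrow> real \<Rightarrow> nat \<Rightarrow> (nat \<Rightarrow> real) \<Rightarrow> (nat \<Rightarrow> real) \<Rightarrow> real" where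
  "PS f a b c d n p q = (\<Sum>i<n. (c * p i + d * q i) * f ((a * p i + b * q i) / (c * p i + d * q i)))"

lemma persp:
  fixes f :: "real \<Rightarrow> real"
  assumes cv: "convex_on S f" and y1: "y1 > 0" and y2: "y2 > 0" and t: "0 \<le> t" "t \<le> 1"
    and u1: "x1 / y1 \<in> S" and u2: "x2 / y2 \<in> S"
  shows "(t * y1 + (1 - t) * y2) * f ((t * x1 + (1 - t) * x2) / (t * y1 + (1 - t) * y2))
     \<le> t * (y1 * f (x1 / y1)) + (1 - t) * (y2 * f (x2 / y2))"
proof -
  define Y where "Y = t * y1 + (1 - t) * y2"
  have Y: "Y > 0" unfolding Y_def using y1 y2 t
    by (smt (verit, best) mult_nonneg_nonneg mult_pos_pos)
  define mu where "mu = (1 - t) * y2 / Y"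
  have mu0: "0 \<le> mu" unfolding mu_def using Y y2 t by simp
  have mu1: "mu \<le> 1" unfolding mu_def using Y y1 t by (simp add: Y_def field_simps)
  have m1: "1 - mu = t * y1 / Y" unfolding mu_def using Y by (simp add: Y_def field_simps)
  have eq: "(t * x1 + (1 - t) * x2) / Y = (1 - mu) *\<^sub>R (x1 / y1) + mu *\<^sub>R (x2 / y2)"
    unfolding m1 unfolding mu_def using Y y1 y2 by (simp add: field_simps)
  have "f ((t * x1 + (1 - t) * x2) / Y) \<le> (1 - mu) * f (x1 / y1) + mu * f (x2 / y2)"
    unfolding eq by (rule convex_onD[OF cv mu0 mu1 u1 u2])
  hence "Y * f ((t * x1 + (1 - t) * x2) / Y) \<le> Y * ((1 - mu) * f (x1 / y1) + mu * f (x2 / y2))"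
    using Y by simp
  also have "\<dots> = t * (y1 * f (x1 / y1)) + (1 - t) * (y2 * f (x2 / y2))"
    unfolding m1 unfolding mu_def using Y by (simp add: field_simps)
  finally show ?thesis unfolding Y_def .
qed

lemma Gamma_comb:
  assumes "p1 \<in> Gamma n" "p2 \<in> Gamma n" "0 \<le> t" "t \<le> 1"
  shows "(\<lambda>i. t * p1 i + (1 - t) * p2 i) \<in> Gamma n"
proof -
  have "\<forall>i<n. 0 < t * p1 i + (1 - t) * p2 i"
  proof (intro allI impI)
    fix i assume "i < n"
    hence "p1 i > 0" "p2 i > 0" using assms unfolding Gamma_def by auto
    thus "0 < t * p1 i + (1 - t) * p2 i" using assms(3,4)
      by (smt (verit, best) mult_nonneg_nonneg mult_pos_pos)
  qed
  moreover have "(\<Sum>i<n. t * p1 i + (1 - t) * p2 i) = 1"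
    using assms unfolding Gamma_def by (simp add: sum.distrib sum_distrib_left[symmetric])
  ultimately show ?thesis unfolding Gamma_def by simp
qed

lemma PS_convex:
  assumes cv: "convex_on S f"
    and pos: "\<And>p q i. p \<in> Gamma n \<Longrightarrow> q \<in> Gamma n \<Longrightarrow> i < n \<Longrightarrow> c * p i + d * q i > 0"
    and inS: "\<And>p q i. p \<in> Gamma n \<Longrightarrow> q \<in> Gamma n \<Longrightarrow> i < n \<Longrightarrow> (a * p i + b * q i) / (c * p i + d * q i) \<in> S"
    and eqD: "\<And>p q. p \<in> Gamma n \<Longrightarrow> q \<in> Gamma n \<Longrightarrow> D p q = PS f a b c d n p q"
  shows "jointly_convex_on_Gamma n D"
  unfolding jointly_convex_on_Gamma_def
proof (intro ballI allI impI)
  fix p1 q1 p2 q2 and t :: real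
  assume g: "p1 \<in> Gamma n" "q1 \<in> Gamma n" "p2 \<in> Gamma n" "q2 \<in> Gamma n" and t: "0 \<le> t \<and> t \<le> 1"
  have gp: "(\<lambda>i. t * p1 i + (1 - t) * p2 i) \<in> Gamma n" and gq: "(\<lambda>i. t * q1 i + (1 - t) * q2 i) \<in> Gamma n"
    using Gamma_comb g t by auto
  have "PS f a b c d n (\<lambda>i. t * p1 i + (1 - t) * p2 i) (\<lambda>i. t * q1 i + (1 - t) * q2 i)
     \<le> t * PS f a b c d n p1 q1 + (1 - t) * PS f a b c d n p2 q2"
    unfolding PS_def sum_distrib_left sum.distrib[symmetric]
  proof (rule sum_mono)
    fix i assume i: "i \<in> {..<n}"
    have e1: "c * (t * p1 i + (1 - t) * p2 i) + d * (t * q1 i + (1 - t) * q2 i)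
      = t * (c * p1 i + d * q1 i) + (1 - t) * (c * p2 i + d * q2 i)" by (simp add: algebra_simps)
    have e2: "a * (t * p1 i + (1 - t) * p2 i) + b * (t * q1 i + (1 - t) * q2 i)
      = t * (a * p1 i + b * q1 i) + (1 - t) * (a * p2 i + b * q2 i)" by (simp add: algebra_simps)
    show "(c * (t * p1 i + (1 - t) * p2 i) + d * (t * q1 i + (1 - t) * q2 i)) *
          f ((a * (t * p1 i + (1 - t) * p2 i) + b * (t * q1 i + (1 - t) * q2 i)) /
             (c * (t * p1 i + (1 - t) * p2 i) + d * (t * q1 i + (1 - t) * q2 i)))
          \<le> t * ((c * p1 i + d * q1 i) * f ((a * p1 i + b * q1 i) / (c * p1 i + d * q1 i))) +
             (1 - t) * ((c * p2 i + d * q2 i) * f ((a * p2 i + b * q2 i) / (c * p2 i + d * q2 i)))"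
      unfolding e1 e2
      by (rule persp[OF cv]) (use i g t pos inS in auto)
  qed
  thus "D (\<lambda>i. t * p1 i + (1 - t) * p2 i) (\<lambda>i. t * q1 i + (1 - t) * q2 i) \<le> t * D p1 q1 + (1 - t) * D p2 q2"
    using eqD g gp gq by simp
qed

lemma PS_nonneg:
  assumes cv: "convex_on S f" and n: "n \<ge> 1" and f1: "f 1 = 0" and ab: "a + b = 1" and cd: "c + d = 1"
    and pos: "\<And>p q i. p \<in> Gamma n \<Longrightarrow> q \<in> Gamma n \<Longrightarrow> i < n \<Longrightarrow> c * p i + d * q i > 0"
    and inS: "\<And>p q i. p \<in> Gamma n \<Longrightarrow> q \<in> Gamma n \<Longrightarrow> i < n \<Longrightarrow> (a * p i + b * q i) / (c * p i + d * q i) \<in> S"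
    and eqD: "\<And>p q. p \<in> Gamma n \<Longrightarrow> q \<in> Gamma n \<Longrightarrow> D p q = PS f a b c d n p q"
  shows "nonneg_on_Gamma n D"
  unfolding nonneg_on_Gamma_def
proof (intro ballI)
  fix p q assume g: "p \<in> Gamma n" "q \<in> Gamma n"
  have sp: "(\<Sum>i<n. p i) = 1" and sq: "(\<Sum>i<n. q i) = 1" using g unfolding Gamma_def by auto
  have s1: "(\<Sum>i<n. c * p i + d * q i) = 1"
    using sp sq cd by (simp add: sum.distrib sum_distrib_left[symmetric])
  have s2: "(\<Sum>i<n. (c * p i + d * q i) *\<^sub>R ((a * p i + b * q i) / (c * p i + d * q i))) = 1"
  proof -
    have "(\<Sum>i<n. (c * p i + d * q i) *\<^sub>R ((a * p i + b * q i) / (c * p i + d * q i)))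
        = (\<Sum>i<n. a * p i + b * q i)"
    proof (rule sum.cong)
      fix i assume "i \<in> {..<n}"
      hence "c * p i + d * q i > 0" using pos[OF g] by simp
      thus "(c * p i + d * q i) *\<^sub>R ((a * p i + b * q i) / (c * p i + d * q i)) = a * p i + b * q i"
        by simp
    qed simp
    also have "\<dots> = 1" using sp sq ab by (simp add: sum.distrib sum_distrib_left[symmetric])
    finally show ?thesis .
  qed
  have "f (\<Sum>i<n. (c * p i + d * q i) *\<^sub>R ((a * p i + b * q i) / (c * p i + d * q i)))
     \<le> (\<Sum>i<n. (c * p i + d * q i) * f ((a * p i + b * q i) / (c * p i + d * q i)))"
    by (rule convex_on_sum[OF _ _ cv s1]) (use n pos[OF g] inS[OF g] in \<open>auto intro: less_imp_le simp: lessThan_empty_iff\<close>)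
  thus "0 \<le> D p q" unfolding s2 f1 using eqD[OF g] by (simp add: PS_def)
qed

definition fphi :: "real \<Rightarrow> real \<Rightarrow> real" where
  "fphi s u = (if s = 0 then - ln u else if s = 1 then u * ln u else (u powr s - 1) / (s * (s - 1)))"

definition gz :: "real \<Rightarrow> real \<Rightarrow> real" where
  "gz s u = (if s = 1 then 2 * (u - 1) * ln u else 2 * (u powr s - u powr (s - 1)) / (s - 1))"

lemma fphi1: "fphi s 1 = 0" by (simp add: fphi_def[abs_def])
lemma gz1: "gz s 1 = 0" by (simp add: gz_def[abs_def])

lemma fphi_convex: "convex_on {0<..} (fphi s)"
proof (cases "s = 0")
  case True
  have "convex_on {0<..} (\<lambda>u::real. - ln u)"
    by (rule f''_ge0_imp_convex[where f' = "\<lambda>u. - 1 / u" and f'' = "\<lambda>u. 1 / u^2"])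
       (auto intro!: derivative_eq_intros simp: power2_eq_square field_simps)
  thus ?thesis using True by (simp add: fphi_def[abs_def])
next
  case s0: False
  show ?thesis
  proof (cases "s = 1")
    case True
    have "convex_on {0<..} (\<lambda>u::real. u * ln u)"
      by (rule f''_ge0_imp_convex[where f' = "\<lambda>u. ln u + 1" and f'' = "\<lambda>u. 1 / u"])
         (auto intro!: derivative_eq_intros simp: field_simps)
    thus ?thesis using True by (simp add: fphi_def[abs_def])
  next
    case s1: False
    have "convex_on {0<..} (\<lambda>u::real. (u powr s - 1) / (s * (s - 1)))"
    proof (rule f''_ge0_imp_convex[where f' = "\<lambda>u. u powr (s - 1) / (s - 1)" and f'' = "\<lambda>u. u powr (s - 2)"])
      fix x :: real assume x: "x \<in> {0<..}"
      have x0: "x > 0" using x by simp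
      show "((\<lambda>u. (u powr s - 1) / (s * (s - 1))) has_real_derivative x powr (s - 1) / (s - 1)) (at x)"
        apply (rule DERIV_cong)
         apply (rule DERIV_cdivide)
         apply (rule DERIV_diff)
          apply (rule has_real_derivative_powr, rule x0)
         apply (rule DERIV_const)
        using s0 by simp
      show "((\<lambda>u. u powr (s - 1) / (s - 1)) has_real_derivative x powr (s - 2)) (at x)"
        apply (rule DERIV_cong)
         apply (rule DERIV_cdivide)
         apply (rule has_real_derivative_powr, rule x0)
        using s1 by (simp add: field_simps)
      show "0 \<le> x powr (s - 2)" by simp
    qed simp
    thus ?thesis using s0 s1 by (simp add: fphi_def[abs_def])
  qed
qed

lemma gz_convex: assumes "0 \<le> s" "s \<le> 4" shows "convex_on {1/2<..} (gz s)"
proof (cases "s = 1")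
  case True
  have "convex_on {1/2<..} (\<lambda>u::real. 2 * (u - 1) * ln u)"
    by (rule f''_ge0_imp_convex[where f' = "\<lambda>u. 2 * ln u + 2 - 2 / u" and f'' = "\<lambda>u. 2 / u + 2 / u^2"])
       (auto intro!: derivative_eq_intros simp: power2_eq_square field_simps)
  thus ?thesis using True by (simp add: gz_def[abs_def])
next
  case s1: False
  have "convex_on {1/2<..} (\<lambda>u::real. 2 * (u powr s - u powr (s - 1)) / (s - 1))"
  proof (rule f''_ge0_imp_convex[where f' = "\<lambda>u. 2 * (s * u powr (s - 1) - (s - 1) * u powr (s - 2)) / (s - 1)"
       and f'' = "\<lambda>u. 2 * (s * u powr (s - 2) - (s - 2) * u powr (s - 3))"])
    fix x :: real assume x: "x \<in> {1/2<..}"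
    hence x0: "x > 0" by simp
    show "((\<lambda>u. 2 * (u powr s - u powr (s - 1)) / (s - 1)) has_real_derivative
        2 * (s * x powr (s - 1) - (s - 1) * x powr (s - 2)) / (s - 1)) (at x)"
      apply (rule DERIV_cong)
       apply (rule DERIV_cdivide)
       apply (rule DERIV_cmult)
       apply (rule DERIV_diff)
        apply (rule has_real_derivative_powr, rule x0)
       apply (rule has_real_derivative_powr, rule x0)
      by (simp add: algebra_simps)
    show "((\<lambda>u. 2 * (s * u powr (s - 1) - (s - 1) * u powr (s - 2)) / (s - 1)) has_real_derivative
        2 * (s * x powr (s - 2) - (s - 2) * x powr (s - 3))) (at x)"
      apply (rule DERIV_cong)
       apply (rule DERIV_cdivide)
       apply (rule DERIV_cmult)
       apply (rule DERIV_diff)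
        apply (rule DERIV_cmult)
        apply (rule has_real_derivative_powr, rule x0)
       apply (rule DERIV_cmult)
       apply (rule has_real_derivative_powr, rule x0)
      using s1 by (simp add: field_simps)
    have e: "x powr (s - 2) = x * x powr (s - 3)"
    proof -
      have "x powr (s - 2) = x powr (1 + (s - 3))" by (rule arg_cong[where f="\<lambda>e. x powr e"]) simp
      also have "\<dots> = x powr 1 * x powr (s - 3)" by (rule powr_add)
      also have "x powr 1 = x" using x0 by (simp only: powr_one_gt_zero_iff)
      finally show ?thesis .
    qed
    have "s * x \<ge> s * (1/2)" using x assms by (intro mult_left_mono) auto
    hence h: "0 \<le> x powr (s - 3) * (s * x - (s - 2))" using assms by simp
    have "2 * (s * x powr (s - 2) - (s - 2) * x powr (s - 3)) = 2 * (x powr (s - 3) * (s * x - (s - 2)))"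
      unfolding e by (simp add: algebra_simps)
    thus "0 \<le> 2 * (s * x powr (s - 2) - (s - 2) * x powr (s - 3))" using h by simp
  qed simp
  thus ?thesis using s1 by (simp add: gz_def[abs_def])
qed

lemma powr_succ: "(u::real) > 0 \<Longrightarrow> u powr s = u * u powr (s - 1)"
proof -
  assume u: "u > 0"
  have "u powr s = u powr (1 + (s - 1))" by (rule arg_cong[where f="\<lambda>e. u powr e"]) simp
  also have "\<dots> = u powr 1 * u powr (s - 1)" by (rule powr_add)
  also have "u powr 1 = u" using u by (simp only: powr_one_gt_zero_iff)
  finally show ?thesis .
qed

lemma T_phi: assumes x: "(x::real) > 0" and y: "y > 0"
  shows "(0 * x + 1 * y) * fphi s ((1 * x + 0 * y) / (0 * x + 1 * y)) =
    (if s = 0 then y * ln (y / x) else if s = 1 then x * ln (x / y)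
     else (x powr s * y powr (1 - s) - y) / (s * (s - 1)))"
proof -
  have "y * (x / y) powr s = x powr s * y powr (1 - s)"
    using x y by (simp add: powr_divide powr_diff field_simps)
  thus ?thesis using x y by (auto simp: fphi_def ln_div field_simps)
qed

lemma T_om1: assumes x: "(x::real) > 0" and y: "y > 0"
  shows "(1 * x + 0 * y) * fphi s ((1/2 * x + 1/2 * y) / (1 * x + 0 * y)) =
    (if s = 0 then x * ln (2 * x / (x + y)) else if s = 1 then (x + y) / 2 * ln ((x + y) / (2 * x))
     else (x * ((x + y) / (2 * x)) powr s - x) / (s * (s - 1)))"
proof -
  have e: "(1/2 * x + 1/2 * y) / (1 * x + 0 * y) = (x + y) / (2 * x)" using x by (simp add: field_simps)
  have l: "- ln ((x + y) / (2 * x)) = ln (2 * x / (x + y))" using x y by (simp add: ln_div)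
  show ?thesis unfolding e using x y l by (auto simp: fphi_def field_simps)
qed

lemma T_om2: assumes x: "(x::real) > 0" and y: "y > 0"
  shows "(0 * x + 1 * y) * fphi s ((1/2 * x + 1/2 * y) / (0 * x + 1 * y)) =
    (if s = 0 then y * ln (2 * y / (y + x)) else if s = 1 then (y + x) / 2 * ln ((y + x) / (2 * y))
     else (y * ((y + x) / (2 * y)) powr s - y) / (s * (s - 1)))"
  using T_om1[OF y x, of s] by (simp add: add.commute)

lemma T_z1: assumes x: "(x::real) > 0" and y: "y > 0"
  shows "(0 * x + 1 * y) * gz s ((1/2 * x + 1/2 * y) / (0 * x + 1 * y)) =
    (if s = 1 then (x - y) * ln ((x + y) / (2 * y))
     else (x - y) * ((x + y) / (2 * y)) powr (s - 1) / (s - 1))"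
proof -
  have e: "(1/2 * x + 1/2 * y) / (0 * x + 1 * y) = (x + y) / (2 * y)" using y by (simp add: field_simps)
  define u where "u = (x + y) / (2 * y)"
  have u: "u > 0" unfolding u_def using x y by simp
  have yu: "2 * y * (u - 1) = x - y" unfolding u_def using y by (simp add: field_simps)
  have ps: "u powr s = u * u powr (s - 1)" by (rule powr_succ[OF u])
  show ?thesis
  proof (cases "s = 1")
    case True
    have "y * (2 * (u - 1) * ln u) = (2 * y * (u - 1)) * ln u" by (simp add: algebra_simps)
    thus ?thesis unfolding e u_def[symmetric] yu using True by (simp add: gz_def)
  next
    case False
    have "y * (2 * (u powr s - u powr (s - 1)) / (s - 1)) = (2 * y * (u - 1)) * u powr (s - 1) / (s - 1)"
      unfolding ps by (simp add: algebra_simps)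
    thus ?thesis unfolding e u_def[symmetric] yu using False by (simp add: gz_def)
  qed
qed

lemma T_z2: assumes x: "(x::real) > 0" and y: "y > 0"
  shows "(1 * x + 0 * y) * gz s ((1/2 * x + 1/2 * y) / (1 * x + 0 * y)) =
    (if s = 1 then (y - x) * ln ((y + x) / (2 * x))
     else (y - x) * ((y + x) / (2 * x)) powr (s - 1) / (s - 1))"
  using T_z1[OF y x, of s] by (simp add: add.commute)


lemma sum_helper: "(\<Sum>i<n. w i) = (1::real) \<Longrightarrow> ((\<Sum>i<n. a i) - 1) / c = (\<Sum>i<n. (a i - w i) / c)"
  by (simp add: sum_divide_distrib[symmetric] sum_subtractf)

lemma Gamma_pos: "p \<in> Gamma n \<Longrightarrow> i < n \<Longrightarrow> p i > 0" by (simp add: Gamma_def)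
lemma Gamma_sum: "p \<in> Gamma n \<Longrightarrow> (\<Sum>i<n. p i) = 1" by (simp add: Gamma_def)

lemma E_phi: assumes "p \<in> Gamma n" "q \<in> Gamma n" shows "Phi s n p q = PS (fphi s) 1 0 0 1 n p q"
proof -
  have "PS (fphi s) 1 0 0 1 n p q = (\<Sum>i<n. (if s = 0 then q i * ln (q i / p i) else if s = 1 then p i * ln (p i / q i)
     else (p i powr s * q i powr (1 - s) - q i) / (s * (s - 1))))"
    unfolding PS_def by (rule sum.cong) (use T_phi Gamma_pos assms in auto)
  thus ?thesis unfolding Phi_def using sum_helper[OF Gamma_sum[OF assms(2)]] by auto
qed

lemma E_om1: assumes "p \<in> Gamma n" "q \<in> Gamma n" shows "Omega s n p q = PS (fphi s) (1/2) (1/2) 1 0 n p q"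
proof -
  have "PS (fphi s) (1/2) (1/2) 1 0 n p q = (\<Sum>i<n. (if s = 0 then p i * ln (2 * p i / (p i + q i)) else if s = 1 then (p i + q i) / 2 * ln ((p i + q i) / (2 * p i))
     else (p i * ((p i + q i) / (2 * p i)) powr s - p i) / (s * (s - 1))))"
    unfolding PS_def by (rule sum.cong) (use T_om1 Gamma_pos assms in auto)
  thus ?thesis unfolding Omega_def using sum_helper[OF Gamma_sum[OF assms(1)]] by auto
qed

lemma E_om2: assumes "p \<in> Gamma n" "q \<in> Gamma n" shows "Omega s n q p = PS (fphi s) (1/2) (1/2) 0 1 n p q"
proof -
  have "PS (fphi s) (1/2) (1/2) 0 1 n p q = (\<Sum>i<n. (if s = 0 then q i * ln (2 * q i / (q i + p i)) else if s = 1 then (q i + p i) / 2 * ln ((q i + p i) / (2 * q i))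
     else (q i * ((q i + p i) / (2 * q i)) powr s - q i) / (s * (s - 1))))"
    unfolding PS_def by (rule sum.cong) (use T_om2 Gamma_pos assms in auto)
  thus ?thesis unfolding Omega_def using sum_helper[OF Gamma_sum[OF assms(2)]] by auto
qed

lemma E_z1: assumes "p \<in> Gamma n" "q \<in> Gamma n" shows "Zeta s n p q = PS (gz s) (1/2) (1/2) 0 1 n p q"
proof -
  have "PS (gz s) (1/2) (1/2) 0 1 n p q = (\<Sum>i<n. (if s = 1 then (p i - q i) * ln ((p i + q i) / (2 * q i))
     else (p i - q i) * ((p i + q i) / (2 * q i)) powr (s - 1) / (s - 1)))"
    unfolding PS_def by (rule sum.cong) (use T_z1 Gamma_pos assms in auto)
  thus ?thesis unfolding Zeta_def by (auto simp: sum_divide_distrib)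
qed

lemma E_z2: assumes "p \<in> Gamma n" "q \<in> Gamma n" shows "Zeta s n q p = PS (gz s) (1/2) (1/2) 1 0 n p q"
proof -
  have "PS (gz s) (1/2) (1/2) 1 0 n p q = (\<Sum>i<n. (if s = 1 then (q i - p i) * ln ((q i + p i) / (2 * p i))
     else (q i - p i) * ((q i + p i) / (2 * p i)) powr (s - 1) / (s - 1)))"
    unfolding PS_def by (rule sum.cong) (use T_z2 Gamma_pos assms in auto)
  thus ?thesis unfolding Zeta_def by (auto simp: sum_divide_distrib)
qed

lemma half_ratio: "(x::real) > 0 \<Longrightarrow> y > 0 \<Longrightarrow> (1/2 * x + 1/2 * y) / y > 1/2"
  by (simp add: field_simps)

theorem mainTheorem2:
  fixes n :: nat
  assumes "2 \<le> n"
  shows "(\<forall>s::real.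
            nonneg_on_Gamma n (Phi s n) \<and> jointly_convex_on_Gamma n (Phi s n) \<and>
            nonneg_on_Gamma n (Omega s n) \<and> jointly_convex_on_Gamma n (Omega s n) \<and>
            nonneg_on_Gamma n (\<lambda>p q. Omega s n q p) \<and> jointly_convex_on_Gamma n (\<lambda>p q. Omega s n q p))
       \<and> (\<forall>s::real. 0 \<le> s \<and> s \<le> 4 \<longrightarrow>
            nonneg_on_Gamma n (Zeta s n) \<and> jointly_convex_on_Gamma n (Zeta s n) \<and>
            nonneg_on_Gamma n (\<lambda>p q. Zeta s n q p) \<and> jointly_convex_on_Gamma n (\<lambda>p q. Zeta s n q p))"
proof (intro conjI allI impI)
  fix s :: real
  have n1: "n \<ge> 1" using assms by simp
  note cv = fphi_convex[of s]
  show "nonneg_on_Gamma n (Phi s n)"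
    by (rule PS_nonneg[OF cv n1 fphi1, of 1 0 0 1]) (auto simp: Gamma_pos E_phi)
  show "jointly_convex_on_Gamma n (Phi s n)"
    by (rule PS_convex[OF cv, of n 0 1 1 0]) (auto simp: Gamma_pos E_phi)
  show "nonneg_on_Gamma n (Omega s n)"
    by (rule PS_nonneg[OF cv n1 fphi1, of "1/2" "1/2" 1 0]) (auto simp: Gamma_pos E_om1 add_pos_pos)
  show "jointly_convex_on_Gamma n (Omega s n)"
    by (rule PS_convex[OF cv, of n 1 0 "1/2" "1/2"]) (auto simp: Gamma_pos E_om1 add_pos_pos)
  show "nonneg_on_Gamma n (\<lambda>p q. Omega s n q p)"
    by (rule PS_nonneg[OF cv n1 fphi1, of "1/2" "1/2" 0 1]) (auto simp: Gamma_pos E_om2 add_pos_pos)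
  show "jointly_convex_on_Gamma n (\<lambda>p q. Omega s n q p)"
    by (rule PS_convex[OF cv, of n 0 1 "1/2" "1/2"]) (auto simp: Gamma_pos E_om2 add_pos_pos)
next
  fix s :: real
  assume s: "0 \<le> s \<and> s \<le> 4"
  have n1: "n \<ge> 1" using assms by simp
  have cv: "convex_on {1/2<..} (gz s)" using gz_convex s by auto
  have r1: "(1/2 * p i + 1/2 * q i) / (0 * p i + 1 * q i) \<in> {1/2<..}" if "p \<in> Gamma n" "q \<in> Gamma n" "i < n" for p q i
    using half_ratio[OF Gamma_pos[OF that(1,3)] Gamma_pos[OF that(2,3)]] by simp
  have r2: "(1/2 * p i + 1/2 * q i) / (1 * p i + 0 * q i) \<in> {1/2<..}" if "p \<in> Gamma n" "q \<in> Gamma n" "i < n" for p q i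
    using half_ratio[OF Gamma_pos[OF that(2,3)] Gamma_pos[OF that(1,3)]] by (simp add: add.commute)
  show "nonneg_on_Gamma n (Zeta s n)"
    by (rule PS_nonneg[OF cv n1 gz1, of "1/2" "1/2" 0 1]) (auto simp: Gamma_pos E_z1 r1)
  show "jointly_convex_on_Gamma n (Zeta s n)"
    by (rule PS_convex[OF cv, of n 0 1 "1/2" "1/2"]) (auto simp: Gamma_pos E_z1 r1)
  show "nonneg_on_Gamma n (\<lambda>p q. Zeta s n q p)"
    by (rule PS_nonneg[OF cv n1 gz1, of "1/2" "1/2" 1 0]) (auto simp: Gamma_pos E_z2 r2)
  show "jointly_convex_on_Gamma n (\<lambda>p q. Zeta s n q p)"
    by (rule PS_convex[OF cv, of n 1 0 "1/2" "1/2"]) (auto simp: Gamma_pos E_z2 r2)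
qed

end
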